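(* Let $k\ge 2$, $n\ge1$ be integers, let $\bar{\mathcal{P}}\in\mathbb{R}^{[k,n]}$ be a columnwise-substochastic tensor, $\mathbf{v}\in\mathbb{R}^n$ a stochastic vector and $\alpha\in[0,1)$. Let $\Delta:=\{\mathbf{y}\in\mathbb{R}^n_+:\mathbf{e}^T\mathbf{y}\le(1-\alpha)^{-\frac{1}{k-1}}\}$ and let $\mathbf{y}_*\in\Delta$. Then $\mathbf{y}_*$ solves the MLPPR system $(\mathbf{e}^T\mathbf{y})^{k-2}\mathbf{y}-\alpha\bar{\mathcal{P}}\mathbf{y}^{k-1}=\mathbf{v}$ if and only if $\mathbf{y}_*$ is a fixed point of the continuous map $$\Phi(\mathbf{y}):=\left(1+\alpha\mathbf{e}^T(\bar{\mathcal{P}}\mathbf{y}^{k-1})\right)^{-\frac{k-2}{k-1}}\left(\mathbf{v}+\alpha\bar{\mathcal{P}}\mathbf{y}^{k-1}\right).$$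
   Context: For $\mathcal{P}\in\mathbb{R}^{[k,n]}$ (real tensors of order $k$, dimension $n$) and $\mathbf{y}\in\mathbb{R}^n$, $(\mathcal{P}\mathbf{y}^{k-1})_i=\sum_{i_2,\dots,i_k}p_{i i_2\dots i_k}y_{i_2}\cdots y_{i_k}$. $\bar{\mathcal{P}}$ is columnwise-substochastic if its entries are nonnegative and $\sum_{i}\bar p_{i i_2\dots i_k}\le1$ for all $i_2,\dots,i_k$. $\mathbf{e}$ is the all-ones vector; a stochastic vector is nonnegative with entries summing to $1$. The MLPPR system $(I\circ\mathbf{e}^{\circ(k-2)}-\alpha\bar{\mathcal{P}})\mathbf{y}^{k-1}=\mathbf{v}$ is exactly $(\mathbf{e}^T\mathbf{y})^{k-2}\mathbf{y}-\alpha\bar{\mathcal{P}}\mathbf{y}^{k-1}=\mathbf{v}$. *)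

theory Defs
  imports Complex_Main
begin

text \<open>Indices are 0,...,n-1. Vectors in R^n are functions nat => real (only the values
  at indices < n matter). A tensor of order k and dimension n is a function on index lists
  [i1, i2, ..., ik] with all entries < n.\<close>

definition multi_idx :: "nat \<Rightarrow> nat \<Rightarrow> nat list set" where
  "multi_idx m n = {js. length js = m \<and> set js \<subseteq> {..<n}}"

text \<open>(P y^(k-1))_i = sum over i2..ik of p_{i i2 .. ik} y_{i2} ... y_{ik}\<close>
definition tensor_apply :: "nat \<Rightarrow> nat \<Rightarrow> (nat list \<Rightarrow> real) \<Rightarrow> (nat \<Rightarrow> real) \<Rightarrow> nat \<Rightarrow> real" where
  "tensor_apply k n P y i = (\<Sum>js\<in>multi_idx (k - 1) n. P (i # js) * prod_list (map y js))"

definition col_substochastic :: "nat \<Rightarrow> nat \<Rightarrow> (nat list \<Rightarrow> real) \<Rightarrow> bool" where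
  "col_substochastic k n P \<longleftrightarrow>
     (\<forall>is\<in>multi_idx k n. 0 \<le> P is) \<and>
     (\<forall>js\<in>multi_idx (k - 1) n. (\<Sum>i<n. P (i # js)) \<le> 1)"

definition stochastic_vec :: "nat \<Rightarrow> (nat \<Rightarrow> real) \<Rightarrow> bool" where
  "stochastic_vec n v \<longleftrightarrow> (\<forall>i<n. 0 \<le> v i) \<and> (\<Sum>i<n. v i) = 1"

definition Delta_set :: "nat \<Rightarrow> nat \<Rightarrow> real \<Rightarrow> (nat \<Rightarrow> real) set" where
  "Delta_set k n \<alpha> = {y. (\<forall>i<n. 0 \<le> y i) \<and> (\<Sum>i<n. y i) \<le> (1 - \<alpha>) powr (- 1 / (real k - 1))}"

definition solves_MLPPR :: "nat \<Rightarrow> nat \<Rightarrow> (nat list \<Rightarrow> real) \<Rightarrow> real \<Rightarrow> (nat \<Rightarrow> real) \<Rightarrow> (nat \<Rightarrow> real) \<Rightarrow> bool" where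
  "solves_MLPPR k n P \<alpha> v y \<longleftrightarrow>
     (\<forall>i<n. (\<Sum>j<n. y j) ^ (k - 2) * y i - \<alpha> * tensor_apply k n P y i = v i)"

definition Phi :: "nat \<Rightarrow> nat \<Rightarrow> (nat list \<Rightarrow> real) \<Rightarrow> real \<Rightarrow> (nat \<Rightarrow> real) \<Rightarrow> (nat \<Rightarrow> real) \<Rightarrow> nat \<Rightarrow> real" where
  "Phi k n P \<alpha> v y i =
     (1 + \<alpha> * (\<Sum>j<n. tensor_apply k n P y j)) powr (- (real k - 2) / (real k - 1))
       * (v i + \<alpha> * tensor_apply k n P y i)"

end

theory Submission
  imports Defs
begin

lemma tensor_apply_nonneg:
  assumes "k \<ge> 2" "col_substochastic k n P" "\<forall>i<n. 0 \<le> y i" "i < n"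
  shows "0 \<le> tensor_apply k n P y i"
  unfolding tensor_apply_def
proof (rule sum_nonneg)
  fix js assume js: "js \<in> multi_idx (k - 1) n"
  then have "i # js \<in> multi_idx k n" using assms by (auto simp: multi_idx_def)
  then have "0 \<le> P (i # js)" using assms(2) by (auto simp: col_substochastic_def)
  moreover have "0 \<le> prod_list (map y js)"
    using js assms(3) by (auto simp: multi_idx_def intro!: prod_list_nonneg) blast
  ultimately show "0 \<le> P (i # js) * prod_list (map y js)" by simp
qed

theorem lemma3p5:
  fixes k n :: nat and P :: "nat list \<Rightarrow> real" and v y :: "nat \<Rightarrow> real" and \<alpha> :: real
  assumes "k \<ge> 2" and "n \<ge> 1"
    and "col_substochastic k n P"
    and "stochastic_vec n v"
    and "0 \<le> \<alpha>" and "\<alpha> < 1"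
    and "y \<in> Delta_set k n \<alpha>"
  shows "solves_MLPPR k n P \<alpha> v y \<longleftrightarrow> (\<forall>i<n. Phi k n P \<alpha> v y i = y i)"
proof -
  have ynn: "\<forall>i<n. 0 \<le> y i" using assms(7) by (simp add: Delta_set_def)
  have vsum: "(\<Sum>i<n. v i) = 1" using assms(4) by (simp add: stochastic_vec_def)
  define T where "T = (\<Sum>j<n. tensor_apply k n P y j)"
  define A where "A = 1 + \<alpha> * T"
  define s where "s = (\<Sum>j<n. y j)"
  define r where "r = A powr (1 / (real k - 1))"
  define c where "c = A powr (- (real k - 2) / (real k - 1))"
  have T0: "T \<ge> 0" unfolding T_def
    using tensor_apply_nonneg[OF assms(1) assms(3) ynn] by (intro sum_nonneg) auto
  have Apos: "A > 0" unfolding A_def using T0 assms(5) by (simp add: add_pos_nonneg)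
  have s0: "s \<ge> 0" unfolding s_def using ynn by (intro sum_nonneg) auto
  have rpos: "r > 0" unfolding r_def using Apos by simp
  have k1: "real k - 1 > 0" using assms(1) by simp
  have rk1: "r ^ (k - 1) = A"
  proof -
    have "r ^ (k - 1) = r powr real (k - 1)" using rpos by (simp add: powr_realpow)
    also have "\<dots> = A powr (1 / (real k - 1) * real (k - 1))"
      unfolding r_def by (simp add: powr_powr)
    also have "1 / (real k - 1) * real (k - 1) = 1" using k1 assms(1) by (simp add: of_nat_diff)
    finally show ?thesis using Apos by simp
  qed
  have rk2c: "r ^ (k - 2) * c = 1"
  proof -
    have "r ^ (k - 2) = r powr real (k - 2)" using rpos by (simp add: powr_realpow)
    also have "\<dots> = A powr (1 / (real k - 1) * real (k - 2))"
      unfolding r_def by (simp add: powr_powr)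
    finally have "r ^ (k - 2) * c = A powr (1 / (real k - 1) * real (k - 2) + (- (real k - 2) / (real k - 1)))"
      unfolding c_def by (simp add: powr_add)
    also have "1 / (real k - 1) * real (k - 2) + (- (real k - 2) / (real k - 1)) = 0"
      using assms(1) k1 by (simp add: of_nat_diff field_simps)
    finally show ?thesis using Apos by simp
  qed
  have cA: "c * A = r"
  proof -
    have "c * A = A powr (- (real k - 2) / (real k - 1) + 1)"
      unfolding c_def using Apos by (simp add: powr_add)
    also have "- (real k - 2) / (real k - 1) + 1 = 1 / (real k - 1)"
      using k1 by (simp add: field_simps)
    finally show ?thesis unfolding r_def .
  qed
  have sumeq: "(\<Sum>i<n. v i + \<alpha> * tensor_apply k n P y i) = A"
    unfolding A_def T_def by (simp add: sum.distrib sum_distrib_left vsum)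
  have Phi_eq: "\<And>i. Phi k n P \<alpha> v y i = c * (v i + \<alpha> * tensor_apply k n P y i)"
    unfolding Phi_def c_def A_def T_def by simp
  show ?thesis
  proof
    assume H: "solves_MLPPR k n P \<alpha> v y"
    have e: "\<And>i. i < n \<Longrightarrow> s ^ (k - 2) * y i = v i + \<alpha> * tensor_apply k n P y i"
      using H unfolding solves_MLPPR_def s_def by (simp add: algebra_simps)
    have "s ^ (k - 2) * s = A"
      unfolding s_def[symmetric] using e sumeq
      by (simp add: s_def sum_distrib_left)
    moreover have "s ^ (k - 2) * s = s ^ (k - 1)" using assms(1)
      by (metis Suc_diff_le Suc_1 diff_Suc_Suc power_Suc2)
    ultimately have "s ^ (k - 1) = r ^ (k - 1)" using rk1 by simp
    then have "s = r" using s0 rpos assms(1)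
      by (metis less_imp_le power_eq_imp_eq_base Suc_1 Suc_le_lessD zero_less_diff)
    show "\<forall>i<n. Phi k n P \<alpha> v y i = y i"
    proof (intro allI impI)
      fix i assume "i < n"
      have "Phi k n P \<alpha> v y i = c * (r ^ (k - 2) * y i)"
        using Phi_eq e[OF \<open>i < n\<close>] \<open>s = r\<close> by simp
      also have "\<dots> = y i" using rk2c by (simp add: mult.commute mult.left_commute)
      finally show "Phi k n P \<alpha> v y i = y i" .
    qed
  next
    assume H: "\<forall>i<n. Phi k n P \<alpha> v y i = y i"
    have yi: "\<And>i. i < n \<Longrightarrow> y i = c * (v i + \<alpha> * tensor_apply k n P y i)"
      using H Phi_eq by simp
    have "s = (\<Sum>i<n. c * (v i + \<alpha> * tensor_apply k n P y i))"
      unfolding s_def using yi by simp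
    also have "\<dots> = c * A" using sumeq by (simp add: sum_distrib_left[symmetric])
    finally have "s = r" using cA by simp
    show "solves_MLPPR k n P \<alpha> v y"
      unfolding solves_MLPPR_def
    proof (intro allI impI)
      fix i assume "i < n"
      have "(\<Sum>j<n. y j) ^ (k - 2) * y i = r ^ (k - 2) * c * (v i + \<alpha> * tensor_apply k n P y i)"
        using yi[OF \<open>i < n\<close>] \<open>s = r\<close> s_def by simp
      then show "(\<Sum>j<n. y j) ^ (k - 2) * y i - \<alpha> * tensor_apply k n P y i = v i"
        using rk2c by simp
    qed
  qed
qed

end
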